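(* Let $q$ be real with $0<q<1$ and consider the limit $q\to1-0$. (i) If $\mathbf{k}$ is an admissible index, then $\lim_{q \to 1-0}Z_{q}(g_{\mathbf{k}})=\zeta(\mathbf{k})$. (ii) For any $w \in \mathfrak{n}$, $\lim_{q \to 1-0}Z_{q}(w)=0$.
   Context: Indices: an index is a finite (possibly empty) tuple $\mathbf k=(k_1,\dots,k_r)$ of positive integers; admissible if empty or $k_r\ge2$. For admissible non-empty $\mathbf k$, $\zeta(\mathbf k)=\sum_{0<m_1<\cdots<m_r}m_1^{-k_1}\cdots m_r^{-k_r}$, and $\zeta(\varnothing)=1$. Let $\mathcal{C}=\mathbb{Q}[\hbar]$ ($\hbar$ formal), $\mathfrak{H}=\mathcal{C}\langle a,b\rangle$. For $k\ge1$, $g_k=ba^k$; $g_{\mathbf k}=g_{k_1}\cdots g_{k_r}$, $g_\varnothing=1$. $A=\{\hbar b\}\cup\{ba^k\mid k\ge1\}$, $\mathcal{C}\langle A\rangle$ the $\mathcal{C}$-subalgebra generated by $1$ and $A$, $\mathfrak z$ the $\mathcal C$-span of $A$, $\widehat{\mathfrak H^0}=\mathcal C+\sum_{k\ge1}\mathcal C\langle A\rangle g_k$. For $0<q<1$, $\mathbb{C}$ is a $\mathcal{C}$-module with $\hbar$ acting by $1-q$; $[m]=(1-q^m)/(1-q)$; $F_q(m;\cdot):\mathfrak{z}\to\mathbb{C}$ is $\mathcal{C}$-linear with $F_q(m;\hbar b)=1-q$, $F_q(m;g_k)=q^{km}/[m]^k$; $Z_{q,M}$ is $\mathcal{C}$-linear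 on $\mathcal C\langle A\rangle$ with $Z_{q,M}(1)=1$, $Z_{q,M}(u_1\cdots u_r)=\sum_{0<m_1<\cdots<m_r<M}\prod_i F_q(m_i;u_i)$ ($u_i\in A$); $Z_q(w)=\lim_{M\to\infty}Z_{q,M}(w)$ for $w\in\widehat{\mathfrak H^0}$. Let $\mathfrak n_0$ be the $\mathcal C$-span of the elements $(\hbar b)^{\alpha_1}g_{\beta_1+1}\cdots(\hbar b)^{\alpha_r}g_{\beta_r+1}$ with $r\ge1$, $\alpha_i,\beta_i\ge0$, such that $\alpha_s\ge1$ and $\beta_t\ge1$ for some $1\le s\le t\le r$; and $\mathfrak n=\mathfrak n_0+\hbar\widehat{\mathfrak H^0}$ (where $\hbar$ acts on values as $1-q$). *)

theory Defs
  imports Complex_Main "HOL-Computational_Algebra.Polynomial"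
begin

text \<open>
A word in the alphabet A = {hbar b} \<union> {b a^k | k \<ge> 1} is a list of
naturals: the letter 0 stands for hbar b, the letter k \<ge> 1 stands for g_k = b a^k.
Since A generates a free subalgebra of H, C<A> is the free C-module on such words;
an element of C<A> is a finitely supported function from words to C = Q[hbar]
(rat poly, the indeterminate being hbar).
\<close>

type_synonym CAelem = "nat list \<Rightarrow> rat poly"

definition fsupp :: "CAelem \<Rightarrow> bool" where
  "fsupp c \<longleftrightarrow> finite {w. c w \<noteq> 0}"

definition CA :: "CAelem set" where
  "CA = {c. fsupp c}"

text \<open>hat H^0 = C + sum_k C<A> g_k: support on words that are empty or end in some g_k.\<close>
definition H0hat :: "CAelem set" where
  "H0hat = {c \<in> CA. \<forall>w. c w \<noteq> 0 \<longrightarrow> w = [] \<or> last w \<ge> 1}"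

text \<open>The word (hbar b)^alpha_1 g_(beta_1+1) ... (hbar b)^alpha_r g_(beta_r+1).\<close>
definition ab_word :: "nat list \<Rightarrow> nat list \<Rightarrow> nat list" where
  "ab_word \<alpha> \<beta> = concat (map (\<lambda>(a, b). replicate a 0 @ [b + 1]) (zip \<alpha> \<beta>))"

definition n0_word :: "nat list \<Rightarrow> bool" where
  "n0_word w \<longleftrightarrow> (\<exists>\<alpha> \<beta>. length \<alpha> = length \<beta> \<and> length \<alpha> \<ge> 1 \<and> w = ab_word \<alpha> \<beta> \<and>
      (\<exists>s t. s \<le> t \<and> t < length \<alpha> \<and> \<alpha> ! s \<ge> 1 \<and> \<beta> ! t \<ge> 1))"

definition n0 :: "CAelem set" where
  "n0 = {c \<in> CA. \<forall>w. c w \<noteq> 0 \<longrightarrow> n0_word w}"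

definition nset :: "CAelem set" where
  "nset = {(\<lambda>w. x w + [:0, 1:] * y w) | x y. x \<in> n0 \<and> y \<in> H0hat}"

definition gidx :: "nat list \<Rightarrow> CAelem" where
  "gidx ks = (\<lambda>w. if w = ks then 1 else 0)"

definition admissible :: "nat list \<Rightarrow> bool" where
  "admissible ks \<longleftrightarrow> (\<forall>k\<in>set ks. k \<ge> 1) \<and> (ks = [] \<or> last ks \<ge> 2)"

definition incseqs :: "nat \<Rightarrow> nat \<Rightarrow> nat list set" where
  "incseqs r M = {ms. length ms = r \<and> sorted_wrt (<) ms \<and> (\<forall>m\<in>set ms. 0 < m \<and> m < M)}"

definition qint :: "real \<Rightarrow> nat \<Rightarrow> real" where
  "qint q m = (1 - q ^ m) / (1 - q)"

definition Fq :: "real \<Rightarrow> nat \<Rightarrow> nat \<Rightarrow> real" where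
  "Fq q m u = (if u = 0 then 1 - q else q ^ (u * m) / (qint q m) ^ u)"

definition ZqM_word :: "real \<Rightarrow> nat \<Rightarrow> nat list \<Rightarrow> real" where
  "ZqM_word q M us = (\<Sum>ms\<in>incseqs (length us) M. \<Prod>i<length us. Fq q (ms ! i) (us ! i))"

text \<open>Z_{q,M}, C-linear, hbar acting by 1 - q.\<close>
definition ZqM :: "real \<Rightarrow> nat \<Rightarrow> CAelem \<Rightarrow> real" where
  "ZqM q M c = (\<Sum>w\<in>{w. c w \<noteq> 0}. poly (map_poly of_rat (c w)) (1 - q) * ZqM_word q M w)"

definition Zq :: "real \<Rightarrow> CAelem \<Rightarrow> real" where
  "Zq q c = lim (\<lambda>M. ZqM q M c)"

definition mzv :: "nat list \<Rightarrow> real" where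
  "mzv ks = lim (\<lambda>M. \<Sum>ms\<in>incseqs (length ks) M. \<Prod>i<length ks. 1 / real (ms ! i) ^ (ks ! i))"

end

theory Submission
  imports Defs
begin


definition incs :: "nat \<Rightarrow> nat \<Rightarrow> nat \<Rightarrow> nat list set" where
  "incs a r b = {ms. length ms = r \<and> sorted_wrt (<) ms \<and> (\<forall>m\<in>set ms. a < m \<and> m < b)}"

definition W :: "(nat \<Rightarrow> real) list \<Rightarrow> nat \<Rightarrow> nat \<Rightarrow> real" where
  "W fs a b = (\<Sum>ms\<in>incs a (length fs) b. \<Prod>i<length fs. (fs ! i) (ms ! i))"

lemma finite_incs: "finite (incs a r b)"
proof -
  have "incs a r b \<subseteq> {ms. set ms \<subseteq> {..<b} \<and> length ms = r}"
    by (auto simp: incs_def)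
  moreover have "finite {ms. set ms \<subseteq> {..<b} \<and> length ms = r}"
    by (rule finite_lists_length_eq) auto
  ultimately show ?thesis by (rule finite_subset)
qed

lemma incs_0: "incs a 0 b = {[]}"
  by (auto simp: incs_def)

lemma W_Nil [simp]: "W [] a b = 1"
  by (simp add: W_def incs_0)

lemma incs_snoc: "incs a (Suc r) b = (\<lambda>(m,ms). ms @ [m]) ` (SIGMA m:{a<..<b}. incs a r m)"
proof (rule set_eqI, rule iffI)
  fix xs assume "xs \<in> incs a (Suc r) b"
  then have L: "length xs = Suc r" and S: "sorted_wrt (<) xs" and B: "\<forall>m\<in>set xs. a < m \<and> m < b"
    by (auto simp: incs_def)
  then obtain ms m where xs: "xs = ms @ [m]"
    by (metis length_Suc_conv_rev)
  show "xs \<in> (\<lambda>(m,ms). ms @ [m]) ` (SIGMA m:{a<..<b}. incs a r m)"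
    using L S B unfolding xs by (auto simp: incs_def sorted_wrt_append intro!: image_eqI[where x="(m,ms)"])
next
  fix xs assume "xs \<in> (\<lambda>(m,ms). ms @ [m]) ` (SIGMA m:{a<..<b}. incs a r m)"
  then show "xs \<in> incs a (Suc r) b"
    by (auto simp: incs_def sorted_wrt_append) (meson less_trans)
qed

lemma incs_Cons: "incs a (Suc r) b = (\<lambda>(m,ms). m # ms) ` (SIGMA m:{a<..<b}. incs m r b)"
proof (rule set_eqI, rule iffI)
  fix xs assume "xs \<in> incs a (Suc r) b"
  then have L: "length xs = Suc r" and S: "sorted_wrt (<) xs" and B: "\<forall>m\<in>set xs. a < m \<and> m < b"
    by (auto simp: incs_def)
  then obtain ms m where xs: "xs = m # ms"
    by (metis length_Suc_conv)
  show "xs \<in> (\<lambda>(m,ms). m # ms) ` (SIGMA m:{a<..<b}. incs m r b)"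
    using L S B unfolding xs by (auto simp: incs_def intro!: image_eqI[where x="(m,ms)"])
next
  fix xs assume "xs \<in> (\<lambda>(m,ms). m # ms) ` (SIGMA m:{a<..<b}. incs m r b)"
  then show "xs \<in> incs a (Suc r) b"
    by (auto simp: incs_def) (meson less_trans)
qed

lemma W_snoc: "W (fs @ [f]) a b = (\<Sum>m\<in>{a<..<b}. W fs a m * f m)"
proof -
  let ?r = "length fs"
  have inj: "inj_on (\<lambda>(m,ms). ms @ [m]) (SIGMA m:{a<..<b}. incs a ?r m)"
    by (auto simp: inj_on_def)
  have "W (fs @ [f]) a b = (\<Sum>ms\<in>incs a (Suc ?r) b. \<Prod>i<Suc ?r. ((fs@[f]) ! i) (ms ! i))"
    by (simp add: W_def)
  also have "\<dots> = (\<Sum>(m,ms)\<in>(SIGMA m:{a<..<b}. incs a ?r m). \<Prod>i<Suc ?r. ((fs@[f]) ! i) ((ms@[m]) ! i))"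
    unfolding incs_snoc by (subst sum.reindex[OF inj]) (simp add: case_prod_unfold)
  also have "\<dots> = (\<Sum>(m,ms)\<in>(SIGMA m:{a<..<b}. incs a ?r m). (\<Prod>i<?r. (fs ! i) (ms ! i)) * f m)"
  proof (rule sum.cong[OF refl], clarify)
    fix m ms assume "ms \<in> incs a ?r m"
    then have "length ms = ?r" by (simp add: incs_def)
    then show "(\<Prod>i<Suc ?r. ((fs@[f]) ! i) ((ms@[m]) ! i)) = (\<Prod>i<?r. (fs ! i) (ms ! i)) * f m"
      by (simp add: prod.lessThan_Suc nth_append)
  qed
  also have "\<dots> = (\<Sum>m\<in>{a<..<b}. W fs a m * f m)"
    by (subst sum.Sigma[symmetric]) (auto simp: finite_incs W_def sum_distrib_right)
  finally show ?thesis .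
qed

lemma W_Cons: "W (f # fs) a b = (\<Sum>m\<in>{a<..<b}. f m * W fs m b)"
proof -
  let ?r = "length fs"
  have inj: "inj_on (\<lambda>(m,ms). m # ms) (SIGMA m:{a<..<b}. incs m ?r b)"
    by (auto simp: inj_on_def)
  have "W (f # fs) a b = (\<Sum>ms\<in>incs a (Suc ?r) b. \<Prod>i<Suc ?r. ((f # fs) ! i) (ms ! i))"
    by (simp add: W_def)
  also have "\<dots> = (\<Sum>(m,ms)\<in>(SIGMA m:{a<..<b}. incs m ?r b). \<Prod>i<Suc ?r. ((f#fs) ! i) ((m#ms) ! i))"
    unfolding incs_Cons by (subst sum.reindex[OF inj]) (simp add: case_prod_unfold)
  also have "\<dots> = (\<Sum>(m,ms)\<in>(SIGMA m:{a<..<b}. incs m ?r b). f m * (\<Prod>i<?r. (fs ! i) (ms ! i)))"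
    by (rule sum.cong[OF refl]) (simp add: prod.lessThan_Suc_shift del: prod.lessThan_Suc)
  also have "\<dots> = (\<Sum>m\<in>{a<..<b}. f m * W fs m b)"
    by (subst sum.Sigma[symmetric]) (auto simp: finite_incs W_def sum_distrib_left)
  finally show ?thesis .
qed

lemma W_nonneg:
  assumes "\<And>i m. i < length fs \<Longrightarrow> a < m \<Longrightarrow> 0 \<le> (fs ! i) m"
  shows "0 \<le> W fs a b"
  unfolding W_def
  by (intro sum_nonneg prod_nonneg) (auto simp: incs_def intro!: assms)

lemma W_le:
  assumes "length fs = length gs"
    and "\<And>i m. i < length fs \<Longrightarrow> a < m \<Longrightarrow> 0 \<le> (fs ! i) m \<and> (fs ! i) m \<le> (gs ! i) m"
  shows "W fs a b \<le> W gs a b"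
  unfolding W_def assms(1)[symmetric]
  by (intro sum_mono prod_mono) (auto simp: incs_def assms(1) intro!: assms(2))

lemma W_mono_b:
  assumes "\<And>i m. i < length fs \<Longrightarrow> a < m \<Longrightarrow> 0 \<le> (fs ! i) m" and "b \<le> b'"
  shows "W fs a b \<le> W fs a b'"
  unfolding W_def
  by (intro sum_mono2 finite_incs prod_nonneg) (use assms in \<open>auto simp: incs_def\<close>)

lemma ZqM_word_W: "ZqM_word q M us = W (map (\<lambda>u m. Fq q m u) us) 0 M"
  by (simp add: ZqM_word_def W_def incseqs_def incs_def)

lemma mzv_W: "mzv ks = lim (\<lambda>M. W (map (\<lambda>k m. 1 / real m ^ k) ks) 0 M)"
  by (simp add: mzv_def W_def incseqs_def incs_def)



lemma qint_sum: "q \<noteq> 1 \<Longrightarrow> qint q m = (\<Sum>i<m. q^i)"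
  by (simp add: qint_def sum_gp_strict)

definition gq :: "real \<Rightarrow> nat \<Rightarrow> real" where
  "gq q m = q ^ m / qint q m"

lemma qint_ge:
  assumes "0 < q" "q < 1"
  shows "real m * q ^ m \<le> qint q m"
proof -
  have "(\<Sum>i<m. q^m) \<le> (\<Sum>i<m. q^i)"
    by (intro sum_mono power_decreasing) (use assms in auto)
  then show ?thesis using assms by (simp add: qint_sum)
qed

lemma qint_pos:
  assumes "0 < q" "q < 1" "0 < m"
  shows "0 < qint q m"
proof -
  have "0 < real m * q ^ m" using assms by simp
  then show ?thesis using qint_ge[OF assms(1,2), of m] by linarith
qed

lemma gq_nonneg: "0 < q \<Longrightarrow> q < 1 \<Longrightarrow> 0 < m \<Longrightarrow> 0 \<le> gq q m"
  using qint_pos[of q m] by (simp add: gq_def)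

lemma gq_le:
  assumes "0 < q" "q < 1" "0 < m"
  shows "gq q m \<le> 1 / real m"
proof -
  have p: "0 < qint q m" using qint_pos[OF assms] .
  have "q ^ m * real m \<le> qint q m" using qint_ge[OF assms(1,2), of m] by (simp add: mult.commute)
  then show ?thesis using p assms(3) by (simp add: gq_def field_simps)
qed

lemma gq_le1: "0 < q \<Longrightarrow> q < 1 \<Longrightarrow> 0 < m \<Longrightarrow> gq q m \<le> 1"
  using gq_le[of q m] by (smt (verit, ccfv_SIG) divide_le_eq_1 of_nat_0_less_iff of_nat_1 of_nat_le_iff less_one not_le)

lemma Fq_pos: "1 \<le> k \<Longrightarrow> Fq q m k = gq q m ^ k"
proof -
  assume "1 \<le> k"
  moreover have "q ^ (k * m) = (q ^ m) ^ k" by (simp add: power_mult[symmetric] mult.commute)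
  ultimately show ?thesis by (simp add: Fq_def gq_def power_divide)
qed

lemma Fq_zero: "Fq q m 0 = 1 - q"
  by (simp add: Fq_def)

lemma Fq_nonneg: "0 < q \<Longrightarrow> q < 1 \<Longrightarrow> 0 < m \<Longrightarrow> 0 \<le> Fq q m u"
  by (cases "u = 0") (auto simp: Fq_zero Fq_pos gq_nonneg)

lemma Fq_le_gq:
  assumes "0 < q" "q < 1" "0 < m" "1 \<le> k"
  shows "Fq q m k \<le> gq q m"
proof -
  have "gq q m ^ k \<le> gq q m ^ 1"
    by (rule power_decreasing) (use assms gq_nonneg gq_le1 in auto)
  then show ?thesis using assms by (simp add: Fq_pos)
qed

lemma Fq_le_inv:
  assumes "0 < q" "q < 1" "0 < m" "1 \<le> k"
  shows "Fq q m k \<le> 1 / real m"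
  using Fq_le_gq[OF assms] gq_le[OF assms(1-3)] by linarith

lemma Fq_le_gq2:
  assumes "0 < q" "q < 1" "0 < m" "2 \<le> k"
  shows "Fq q m k \<le> gq q m * (1 / real m)"
proof -
  have "gq q m ^ k \<le> gq q m ^ 2"
    by (rule power_decreasing) (use assms gq_nonneg gq_le1 in auto)
  also have "\<dots> = gq q m * gq q m" by (simp add: power2_eq_square)
  also have "\<dots> \<le> gq q m * (1 / real m)"
    by (rule mult_left_mono) (use assms gq_le gq_nonneg in auto)
  finally show ?thesis using assms by (simp add: Fq_pos)
qed

lemma Fq_le_sq:
  assumes "0 < q" "q < 1" "0 < m" "2 \<le> k"
  shows "Fq q m k \<le> 1 / real m ^ 2"
proof -
  have "gq q m * (1 / real m) \<le> (1 / real m) * (1 / real m)"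
    by (rule mult_right_mono) (use assms gq_le in auto)
  then show ?thesis using Fq_le_gq2[OF assms] by (simp add: power2_eq_square)
qed

lemma Fq_le_zeta:
  assumes "0 < q" "q < 1" "0 < m" "1 \<le> k"
  shows "Fq q m k \<le> 1 / real m ^ k"
proof -
  have "gq q m ^ k \<le> (1 / real m) ^ k"
    by (rule power_mono) (use assms gq_le gq_nonneg in auto)
  then show ?thesis using assms by (simp add: Fq_pos power_one_over)
qed

lemma harm_incl: "1 \<le> n \<Longrightarrow> (\<Sum>m\<in>{0<..n}. 1 / real m) \<le> 1 + ln (real n)"
proof (induction n rule: dec_induct)
  case base
  have "{0<..Suc 0} = {1}" by auto
  then show ?case by simp
next
  case (step n)
  have "{0<..Suc n} = insert (Suc n) {0<..n}" by auto
  then have e: "(\<Sum>m\<in>{0<..Suc n}. 1 / real m) = 1 / real (Suc n) + (\<Sum>m\<in>{0<..n}. 1 / real m)"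
    by simp
  have "1 / real (Suc n) \<le> ln (real (Suc n)) - ln (real n)"
  proof -
    have "ln (1 - 1 / real (Suc n)) \<le> - (1 / real (Suc n))"
      using ln_le_minus_one[of "1 - 1 / real (Suc n)"] step.hyps by (simp add: field_simps)
    moreover have "1 - 1 / real (Suc n) = real n / real (Suc n)" by (simp add: field_simps)
    moreover have "ln (real n / real (Suc n)) = ln (real n) - ln (real (Suc n))"
      using step.hyps by (simp add: ln_div)
    ultimately show ?thesis by (metis add.commute add_le_cancel_left diff_add_cancel le_minus_iff minus_diff_eq)
  qed
  then show ?case using e step.IH by linarith
qed

lemma harm_lt: "1 \<le> n \<Longrightarrow> (\<Sum>m\<in>{0<..<n}. 1 / real m) \<le> 1 + ln (real n)"
proof -
  assume n: "1 \<le> n"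
  have "(\<Sum>m\<in>{0<..<n}. 1 / real m) \<le> (\<Sum>m\<in>{0<..n}. 1 / real m)"
    by (intro sum_mono2) auto
  then show ?thesis using harm_incl[OF n] by linarith
qed

definition Lq :: "real \<Rightarrow> real" where
  "Lq q = 1 + ln (1 / (1 - q))"

lemma Lq_ge1: "0 < q \<Longrightarrow> q < 1 \<Longrightarrow> 1 \<le> Lq q"
  by (simp add: Lq_def)

lemma H_bound:
  assumes "0 < q" "q < 1"
  shows "(\<Sum>m\<in>{0<..<n}. 1 / real m) \<le> Lq q + (1 - q) * real n"
proof (cases "n = 0")
  case True
  then show ?thesis using Lq_ge1[OF assms] by simp
next
  case False
  let ?e = "1 - q"
  have e: "0 < ?e" using assms by simp
  have "ln (real n) = ln (1 / ?e) + ln (?e * real n)"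
    using e False by (simp add: ln_mult ln_div)
  also have "ln (?e * real n) \<le> ?e * real n - 1"
    by (rule ln_le_minus_one) (use e False in simp)
  finally have "ln (real n) \<le> ln (1 / ?e) + ?e * real n - 1" by simp
  then show ?thesis using harm_lt[of n] False by (simp add: Lq_def)
qed

lemma letter_sum:
  assumes "0 < q" "q < 1"
  shows "(\<Sum>m\<in>{0<..<n}. Fq q m u) \<le> Lq q * (1 + (1 - q) * real n)"
proof (cases "u = 0")
  case True
  have "(\<Sum>m\<in>{0<..<n}. Fq q m u) = (1 - q) * real (n - 1)"
    using True by (simp add: Fq_zero)
  also have "\<dots> \<le> (1 - q) * real n" using assms by (intro mult_left_mono) auto
  also have "\<dots> \<le> Lq q * (1 + (1 - q) * real n)"
  proof -
    have "0 \<le> (1 - q) * real n" using assms by simp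
    then show ?thesis using Lq_ge1[OF assms]
      by (smt (verit, best) mult_le_cancel_right1 mult.commute)
  qed
  finally show ?thesis .
next
  case False
  have "(\<Sum>m\<in>{0<..<n}. Fq q m u) \<le> (\<Sum>m\<in>{0<..<n}. 1 / real m)"
    by (intro sum_mono Fq_le_inv) (use assms False in auto)
  also have "\<dots> \<le> Lq q + (1 - q) * real n" by (rule H_bound[OF assms])
  also have "\<dots> \<le> Lq q * (1 + (1 - q) * real n)"
  proof -
    have "0 \<le> (1 - q) * real n" using assms by simp
    then show ?thesis using Lq_ge1[OF assms]
      by (smt (verit, best) mult_le_cancel_right1 mult.commute distrib_left mult_1_right)
  qed
  finally show ?thesis .
qed



lemma poly_exp:
  fixes x :: real
  assumes "0 \<le> x"
  shows "(1 + x) ^ s \<le> (2 * real s + 1) ^ s * exp (x / 2)"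
proof -
  let ?c = "2 * real s + 1"
  have c: "1 \<le> ?c" by simp
  have "1 + x \<le> ?c * (1 + x / ?c)"
    using c assms by (simp add: field_simps)
  also have "\<dots> \<le> ?c * exp (x / ?c)"
    using c by (intro mult_left_mono) (auto simp: exp_ge_add_one_self)
  finally have "(1 + x) ^ s \<le> (?c * exp (x / ?c)) ^ s"
    using assms by (intro power_mono) auto
  also have "\<dots> = ?c ^ s * exp (real s * (x / ?c))"
    by (simp add: power_mult_distrib flip: exp_of_nat_mult)
  also have "\<dots> \<le> ?c ^ s * exp (x / 2)"
  proof -
    have "real s * (x / ?c) \<le> x / 2"
      using assms by (simp add: field_simps)
    then show ?thesis by (intro mult_left_mono) auto
  qed
  finally show ?thesis .
qed

lemma term_bound:
  fixes q :: real
  assumes q: "0 < q" "q < 1" and n: "0 < n"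
  shows "(1 + (1 - q) * real n) ^ s * gq q n
     \<le> 2 ^ s * (if (1 - q) * real n \<le> 1 then 1 / real n else 0)
       + 2 * (2 * real s + 1) ^ s * (1 - q) * exp (- (1 - q) / 2) ^ n"
proof -
  let ?e = "1 - q"
  have e: "0 < ?e" "?e < 1" using q by auto
  have g0: "0 \<le> gq q n" using gq_nonneg[OF q n] .
  have r0: "0 \<le> 2 * (2 * real s + 1) ^ s * (1 - q) * exp (- (1 - q) / 2) ^ n"
    using e by simp
  show ?thesis
  proof (cases "?e * real n \<le> 1")
    case True
    have "(1 + ?e * real n) ^ s \<le> 2 ^ s"
      by (rule power_mono) (use True e in auto)
    moreover have "gq q n \<le> 1 / real n" by (rule gq_le[OF q n])
    ultimately have tb: "(1 + ?e * real n) ^ s * gq q n \<le> 2 ^ s * (1 / real n)"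
      using g0 by (intro mult_mono) auto
    show ?thesis by (rule add_increasing2[OF r0]) (use True tb in simp)
  next
    case False
    have qn: "q ^ n \<le> exp (- (?e * real n))"
    proof -
      have "q \<le> exp (- ?e)" using exp_ge_add_one_self[of "- ?e"] by simp
      then have "q ^ n \<le> exp (- ?e) ^ n" using q by (intro power_mono) auto
      also have "\<dots> = exp (- (?e * real n))" by (simp add: exp_of_nat_mult[symmetric] algebra_simps)
      finally show ?thesis .
    qed
    have "exp (- (?e * real n)) \<le> exp (-1)" using False by simp
    also have "exp (-1::real) \<le> 1 / 2"
    proof -
      have "2 \<le> exp (1::real)" using exp_ge_add_one_self[of 1] by simp
      then show ?thesis by (simp add: exp_minus field_simps)
    qed
    finally have qn2: "q ^ n \<le> 1 / 2" using qn by linarith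
    have qi: "qint q n = (1 - q ^ n) / ?e" by (simp add: qint_def)
    have "gq q n = ?e * q ^ n / (1 - q ^ n)"
      using e qn2 by (simp add: gq_def qi field_simps)
    also have "\<dots> \<le> ?e * q ^ n / (1 / 2)"
      using e qn2 q by (intro divide_left_mono) auto
    also have "\<dots> \<le> 2 * ?e * exp (- (?e * real n))"
    proof -
      have "2 * ?e * q ^ n \<le> 2 * ?e * exp (- (?e * real n))"
        using qn e by (intro mult_left_mono) auto
      then show ?thesis by (simp add: algebra_simps)
    qed
    finally have gb: "gq q n \<le> 2 * ?e * exp (- (?e * real n))" .
    have pb: "(1 + ?e * real n) ^ s \<le> (2 * real s + 1) ^ s * exp (?e * real n / 2)"
      by (rule poly_exp) (use e in simp)
    have "(1 + ?e * real n) ^ s * gq q n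
        \<le> ((2 * real s + 1) ^ s * exp (?e * real n / 2)) * (2 * ?e * exp (- (?e * real n)))"
      using g0 pb gb by (intro mult_mono) auto
    also have "\<dots> = 2 * (2 * real s + 1) ^ s * ?e * (exp (?e * real n / 2) * exp (- (?e * real n)))"
      by (simp add: algebra_simps)
    also have "exp (?e * real n / 2) * exp (- (?e * real n)) = exp (- ?e / 2) ^ n"
    proof -
      have "?e * real n / 2 + - (?e * real n) = real n * (- ?e / 2)" by (simp add: field_simps)
      then show ?thesis by (simp only: exp_add[symmetric] exp_of_nat_mult)
    qed
    finally show ?thesis using False by simp
  qed
qed

lemma geom_bound:
  fixes q :: real
  assumes q: "0 < q" "q < 1"
  shows "(1 - q) * (\<Sum>n\<in>{0<..<N}. exp (- (1 - q) / 2) ^ n) \<le> 4"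
proof -
  let ?e = "1 - q" let ?r = "exp (- (1 - q) / 2)"
  have e: "0 < ?e" "?e < 1" using q by auto
  have r: "0 < ?r" "?r < 1" using e by auto
  have "(\<Sum>n\<in>{0<..<N}. ?r ^ n) \<le> (\<Sum>n<N. ?r ^ n)"
    by (intro sum_mono2) (use r in auto)
  also have "\<dots> = (1 - ?r ^ N) / (1 - ?r)" using r by (simp add: sum_gp_strict)
  also have "\<dots> \<le> 1 / (1 - ?r)" using r by (intro divide_right_mono) auto
  finally have s1: "(\<Sum>n\<in>{0<..<N}. ?r ^ n) \<le> 1 / (1 - ?r)" .
  have "?r \<le> 1 / (1 + ?e / 2)"
  proof -
    have X: "1 + ?e / 2 \<le> exp (?e / 2)" by (rule exp_ge_add_one_self)
    have Y: "?r * exp (?e / 2) = 1"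
    proof -
      have "- ?e / 2 + ?e / 2 = 0" by linarith
      then have "exp (- ?e / 2 + ?e / 2) = 1" by simp
      then show ?thesis by (simp add: exp_add)
    qed
    have "?r * (1 + ?e / 2) \<le> ?r * exp (?e / 2)" using X by (intro mult_left_mono) auto
    then have "?r * (1 + ?e / 2) \<le> 1" by (simp only: Y)
    then show ?thesis using e by (simp add: field_simps)
  qed
  then have "1 - ?r \<ge> 1 - 1 / (1 + ?e / 2)" by linarith
  moreover have "1 - 1 / (1 + ?e / 2) \<ge> ?e / 4"
  proof -
    have "q * q \<le> 1" using q by (simp add: mult_le_one)
    then show ?thesis using e by (simp add: field_simps)
  qed
  ultimately have r4: "1 - ?r \<ge> ?e / 4" by linarith
  have "?e * (\<Sum>n\<in>{0<..<N}. ?r ^ n) \<le> ?e * (1 / (1 - ?r))"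
    using s1 e by (intro mult_left_mono) auto
  also have "\<dots> \<le> ?e * (1 / (?e / 4))"
    using r4 e r by (intro mult_left_mono divide_left_mono) auto
  also have "\<dots> = 4" using e by (simp add: field_simps)
  finally show ?thesis .
qed

definition KC :: "nat \<Rightarrow> real" where
  "KC s = 3 * 2 ^ s + 8 * (2 * real s + 1) ^ s"

lemma KL:
  fixes q :: real
  assumes q: "0 < q" "q < 1"
  shows "(\<Sum>n\<in>{0<..<N}. (1 + (1 - q) * real n) ^ s * gq q n) \<le> KC s * Lq q"
proof -
  let ?e = "1 - q" let ?r = "exp (- (1 - q) / 2)"
  let ?C = "2 * (2 * real s + 1) ^ s"
  have e: "0 < ?e" "?e < 1" using q by auto
  have "(\<Sum>n\<in>{0<..<N}. (1 + ?e * real n) ^ s * gq q n)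
      \<le> (\<Sum>n\<in>{0<..<N}. 2 ^ s * (if ?e * real n \<le> 1 then 1 / real n else 0) + ?C * ?e * ?r ^ n)"
    by (intro sum_mono term_bound[OF q]) auto
  also have "\<dots> = 2 ^ s * (\<Sum>n\<in>{0<..<N}. (if ?e * real n \<le> 1 then 1 / real n else 0))
                  + ?C * (?e * (\<Sum>n\<in>{0<..<N}. ?r ^ n))"
    by (simp add: sum.distrib sum_distrib_left mult.assoc)
  also have "(\<Sum>n\<in>{0<..<N}. (if ?e * real n \<le> 1 then 1 / real n else 0)) \<le> Lq q + 2"
  proof -
    define J where "J = nat \<lfloor>1 / ?e\<rfloor> + 1"
    have "(\<Sum>n\<in>{0<..<N}. (if ?e * real n \<le> 1 then 1 / real n else 0))
        = (\<Sum>n\<in>{n\<in>{0<..<N}. ?e * real n \<le> 1}. 1 / real n)"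
      by (rule sum.inter_filter[symmetric]) simp
    also have "\<dots> \<le> (\<Sum>n\<in>{0<..<J}. 1 / real n)"
    proof (rule sum_mono2)
      show "{n\<in>{0<..<N}. ?e * real n \<le> 1} \<subseteq> {0<..<J}"
      proof
        fix n assume "n \<in> {n\<in>{0<..<N}. ?e * real n \<le> 1}"
        then have "0 < n" "real n \<le> 1 / ?e" using e by (auto simp: field_simps)
        then have "n \<le> nat \<lfloor>1 / ?e\<rfloor>" by (simp add: le_nat_floor)
        then show "n \<in> {0<..<J}" using \<open>0 < n\<close> by (simp add: J_def)
      qed
    qed auto
    also have "\<dots> \<le> Lq q + ?e * real J" by (rule H_bound[OF q])
    also have "?e * real J \<le> 2"
    proof -
      have f0: "0 \<le> \<lfloor>1 / ?e\<rfloor>" using e by simp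
      have "real (nat \<lfloor>1 / ?e\<rfloor>) = real_of_int \<lfloor>1 / ?e\<rfloor>" using f0 by simp
      then have "real (nat \<lfloor>1 / ?e\<rfloor>) \<le> 1 / ?e" by simp
      then have "?e * real (nat \<lfloor>1 / ?e\<rfloor>) \<le> 1" by (metis e(1) mult.commute pos_le_divide_eq)
      then show ?thesis using e by (simp add: J_def distrib_left)
    qed
    finally show ?thesis by linarith
  qed
  also have "?e * (\<Sum>n\<in>{0<..<N}. ?r ^ n) \<le> 4" by (rule geom_bound[OF q])
  finally have "(\<Sum>n\<in>{0<..<N}. (1 + ?e * real n) ^ s * gq q n) \<le> 2 ^ s * (Lq q + 2) + ?C * 4"
    by (simp add: mult_left_mono)
  also have "\<dots> \<le> KC s * Lq q"
  proof -
    have L: "1 \<le> Lq q" by (rule Lq_ge1[OF q])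
    have a: "2 ^ s * 2 \<le> 2 ^ s * (2 * Lq q)" using L by (intro mult_left_mono) auto
    have b: "(2 * real s + 1) ^ s * 8 \<le> (2 * real s + 1) ^ s * (8 * Lq q)" using L by (intro mult_left_mono) auto
    have k: "KC s * Lq q = 2^s * Lq q + 2^s * (2 * Lq q) + (2 * real s + 1)^s * (8 * Lq q)"
      by (simp add: KC_def algebra_simps)
    have l: "2 ^ s * (Lq q + 2) + 2 * (2 * real s + 1) ^ s * 4 = 2^s * Lq q + 2^s * 2 + (2 * real s + 1)^s * 8"
      by (simp add: algebra_simps)
    show ?thesis unfolding k l using a b by linarith
  qed
  finally show ?thesis .
qed



definition Bq :: "real \<Rightarrow> nat \<Rightarrow> real" where
  "Bq q n = Lq q * (1 + (1 - q) * real n)"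

lemma Bq_ge1: "0 < q \<Longrightarrow> q < 1 \<Longrightarrow> 1 \<le> Bq q n"
proof -
  assume q: "0 < q" "q < 1"
  have "1 \<le> Lq q" by (rule Lq_ge1[OF q])
  moreover have "1 \<le> 1 + (1 - q) * real n" using q by simp
  ultimately show ?thesis unfolding Bq_def by (metis mult_mono' mult_1 zero_le_one)
qed

lemma Bq_mono: "0 < q \<Longrightarrow> q < 1 \<Longrightarrow> m \<le> n \<Longrightarrow> Bq q m \<le> Bq q n"
  unfolding Bq_def using Lq_ge1[of q]
  by (intro mult_left_mono) (auto intro!: mult_left_mono)

lemma Bq_pow_mono: "0 < q \<Longrightarrow> q < 1 \<Longrightarrow> m \<le> n \<Longrightarrow> Bq q m ^ s \<le> Bq q n ^ s"
  by (intro power_mono Bq_mono) (auto intro: order_trans[OF zero_le_one Bq_ge1])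

lemma Bq_pow_nonneg: "0 < q \<Longrightarrow> q < 1 \<Longrightarrow> 0 \<le> Bq q m ^ s"
  using Bq_ge1[of q m] by simp

lemma letter_sum_B: "0 < q \<Longrightarrow> q < 1 \<Longrightarrow> (\<Sum>m\<in>{0<..<n}. Fq q m u) \<le> Bq q n"
  unfolding Bq_def by (rule letter_sum)

lemma H_bound_B: "0 < q \<Longrightarrow> q < 1 \<Longrightarrow> (\<Sum>m\<in>{0<..<n}. 1 / real m) \<le> Bq q n"
proof -
  assume q: "0 < q" "q < 1"
  have "(1 - q) * real n \<le> Lq q * ((1 - q) * real n)"
    using mult_right_mono[OF Lq_ge1[OF q], of "(1 - q) * real n"] q by simp
  then show ?thesis using H_bound[OF q, of n] unfolding Bq_def by (simp add: algebra_simps)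
qed

lemma PB:
  assumes "\<And>m. W fs 0 m \<le> Bd m" "\<And>m. m \<le> n \<Longrightarrow> Bd m \<le> Bd n" "\<And>m. 0 < m \<Longrightarrow> 0 \<le> f m"
  shows "W (fs @ [f]) 0 n \<le> Bd n * (\<Sum>m\<in>{0<..<n}. f m)"
proof -
  have "W (fs @ [f]) 0 n = (\<Sum>m\<in>{0<..<n}. W fs 0 m * f m)" by (rule W_snoc)
  also have "\<dots> \<le> (\<Sum>m\<in>{0<..<n}. Bd n * f m)"
  proof (rule sum_mono)
    fix m assume m: "m \<in> {0<..<n}"
    have "W fs 0 m \<le> Bd n" using assms(1)[of m] assms(2)[of m] m by auto
    then show "W fs 0 m * f m \<le> Bd n * f m"
      using assms(3)[of m] m by (intro mult_right_mono) auto
  qed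
  also have "\<dots> = Bd n * (\<Sum>m\<in>{0<..<n}. f m)" by (simp add: sum_distrib_left)
  finally show ?thesis .
qed

abbreviation FL :: "real \<Rightarrow> nat list \<Rightarrow> (nat \<Rightarrow> real) list" where
  "FL q us \<equiv> map (\<lambda>u m. Fq q m u) us"

lemma PBgen:
  assumes q: "0 < q" "q < 1"
    and h: "\<And>m. W fs 0 m \<le> c * Bq q m ^ s * g m"
    and c: "0 \<le> c" and g0: "\<And>m. 0 \<le> g m" and gm: "\<And>m n. m \<le> n \<Longrightarrow> g m \<le> g n"
  shows "W (fs @ FL q x) 0 n \<le> c * Bq q n ^ (s + length x) * g n"
proof (induction x arbitrary: n rule: rev_induct)
  case Nil
  then show ?case using h by simp
next
  case (snoc u x)
  let ?Bd = "\<lambda>m. c * Bq q m ^ (s + length x) * g m"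
  have eq: "fs @ FL q (x @ [u]) = (fs @ FL q x) @ [\<lambda>m. Fq q m u]" by simp
  have "W ((fs @ FL q x) @ [\<lambda>m. Fq q m u]) 0 n \<le> ?Bd n * (\<Sum>m\<in>{0<..<n}. Fq q m u)"
  proof (rule PB)
    show "W (fs @ FL q x) 0 m \<le> ?Bd m" for m by (rule snoc.IH)
    show "?Bd m \<le> ?Bd n" if "m \<le> n" for m
      using that c g0 gm Bq_pow_mono[OF q that, of "s + length x"] Bq_pow_nonneg[OF q]
      by (intro mult_mono mult_left_mono) auto
    show "0 \<le> Fq q m u" if "0 < m" for m using Fq_nonneg[OF q that] .
  qed
  also have "\<dots> \<le> ?Bd n * Bq q n"
    using letter_sum_B[OF q, where n=n and u=u] c g0[of n] Bq_pow_nonneg[OF q, of n "s + length x"]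
    by (intro mult_left_mono mult_nonneg_nonneg) auto
  also have "\<dots> = c * Bq q n ^ (s + length (x @ [u])) * g n" by (simp add: algebra_simps)
  finally show ?case using eq by simp
qed

lemma FL_final:
  assumes q: "0 < q" "q < 1"
    and h: "\<And>m. W fs 0 m \<le> c * Bq q m ^ s" and c: "0 \<le> c" and k: "1 \<le> k"
  shows "W (fs @ [\<lambda>m. Fq q m k]) 0 N \<le> c * KC s * Lq q ^ (s + 1)"
proof -
  have "W (fs @ [\<lambda>m. Fq q m k]) 0 N = (\<Sum>m\<in>{0<..<N}. W fs 0 m * Fq q m k)" by (rule W_snoc)
  also have "\<dots> \<le> (\<Sum>m\<in>{0<..<N}. (c * Lq q ^ s) * ((1 + (1 - q) * real m) ^ s * gq q m))"
  proof (rule sum_mono)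
    fix m assume m: "m \<in> {0<..<N}"
    have "W fs 0 m * Fq q m k \<le> (c * Bq q m ^ s) * gq q m"
      using h[of m] Fq_le_gq[OF q _ k, of m] Fq_nonneg[OF q, of m k] m c Bq_ge1[OF q, of m]
      by (intro mult_mono) auto
    also have "\<dots> = (c * Lq q ^ s) * ((1 + (1 - q) * real m) ^ s * gq q m)"
      by (simp add: Bq_def power_mult_distrib)
    finally show "W fs 0 m * Fq q m k \<le> \<dots>" .
  qed
  also have "\<dots> = (c * Lq q ^ s) * (\<Sum>m\<in>{0<..<N}. (1 + (1 - q) * real m) ^ s * gq q m)"
    by (simp add: sum_distrib_left)
  also have "\<dots> \<le> (c * Lq q ^ s) * (KC s * Lq q)"
    using KL[OF q, where N=N and s=s] c Lq_ge1[OF q] by (intro mult_left_mono) auto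
  also have "\<dots> = c * KC s * Lq q ^ (s + 1)" by (simp add: algebra_simps)
  finally show ?thesis .
qed

lemma FL_final2:
  assumes q: "0 < q" "q < 1"
    and h: "\<And>m. W fs 0 m \<le> c * Bq q m ^ s * ((1 - q) * real m)" and c: "0 \<le> c" and k: "2 \<le> k"
  shows "W (fs @ [\<lambda>m. Fq q m k]) 0 N \<le> c * (1 - q) * KC s * Lq q ^ (s + 1)"
proof -
  have "W (fs @ [\<lambda>m. Fq q m k]) 0 N = (\<Sum>m\<in>{0<..<N}. W fs 0 m * Fq q m k)" by (rule W_snoc)
  also have "\<dots> \<le> (\<Sum>m\<in>{0<..<N}. (c * (1 - q) * Lq q ^ s) * ((1 + (1 - q) * real m) ^ s * gq q m))"
  proof (rule sum_mono)
    fix m assume m: "m \<in> {0<..<N}"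
    have B0: "0 \<le> c * Bq q m ^ s * ((1 - q) * real m)" using c q Bq_ge1[OF q, of m] by simp
    have "W fs 0 m * Fq q m k \<le> (c * Bq q m ^ s * ((1 - q) * real m)) * (gq q m * (1 / real m))"
      using h[of m] Fq_le_gq2[OF q _ k, of m] Fq_nonneg[OF q, of m k] m B0
      by (intro mult_mono) auto
    also have "\<dots> = (c * (1 - q) * Lq q ^ s) * ((1 + (1 - q) * real m) ^ s * gq q m)"
      using m by (simp add: Bq_def power_mult_distrib)
    finally show "W fs 0 m * Fq q m k \<le> \<dots>" .
  qed
  also have "\<dots> = (c * (1 - q) * Lq q ^ s) * (\<Sum>m\<in>{0<..<N}. (1 + (1 - q) * real m) ^ s * gq q m)"
    by (simp add: sum_distrib_left)
  also have "\<dots> \<le> (c * (1 - q) * Lq q ^ s) * (KC s * Lq q)"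
    using KL[OF q, where N=N and s=s] c q Lq_ge1[OF q] by (intro mult_left_mono) auto
  also have "\<dots> = c * (1 - q) * KC s * Lq q ^ (s + 1)" by (simp add: algebra_simps)
  finally show ?thesis .
qed

lemma zero_step:
  assumes q: "0 < q" "q < 1"
    and h: "\<And>m. W fs 0 m \<le> c * Bq q m ^ s" and c: "0 \<le> c"
  shows "W (fs @ [\<lambda>m. Fq q m 0]) 0 n \<le> c * Bq q n ^ s * ((1 - q) * real n)"
proof -
  have "W (fs @ [\<lambda>m. Fq q m 0]) 0 n \<le> (c * Bq q n ^ s) * (\<Sum>m\<in>{0<..<n}. Fq q m 0)"
  proof (rule PB)
    show "W fs 0 m \<le> c * Bq q m ^ s" for m by (rule h)
    show "c * Bq q m ^ s \<le> c * Bq q n ^ s" if "m \<le> n" for m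
      using c Bq_pow_mono[OF q that] by (intro mult_left_mono) auto
    show "0 \<le> Fq q m 0" if "0 < m" for m using Fq_nonneg[OF q that] .
  qed
  also have "(\<Sum>m\<in>{0<..<n}. Fq q m 0) \<le> (1 - q) * real n"
    using q by (simp add: Fq_zero)
  then have "(c * Bq q n ^ s) * (\<Sum>m\<in>{0<..<n}. Fq q m 0) \<le> (c * Bq q n ^ s) * ((1 - q) * real n)"
    using c Bq_ge1[OF q, of n] by (intro mult_left_mono) auto
  finally show ?thesis by simp
qed

lemma two_step:
  assumes q: "0 < q" "q < 1"
    and h: "\<And>m. W fs 0 m \<le> c * Bq q m ^ s * ((1 - q) * real m)" and c: "0 \<le> c" and k: "2 \<le> k"
  shows "W (fs @ [\<lambda>m. Fq q m k]) 0 n \<le> (c * (1 - q)) * Bq q n ^ (s + 1)"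
proof -
  have "W (fs @ [\<lambda>m. Fq q m k]) 0 n = (\<Sum>m\<in>{0<..<n}. W fs 0 m * Fq q m k)" by (rule W_snoc)
  also have "\<dots> \<le> (\<Sum>m\<in>{0<..<n}. (c * (1 - q) * Bq q n ^ s) * (1 / real m))"
  proof (rule sum_mono)
    fix m assume m: "m \<in> {0<..<n}"
    have B0: "0 \<le> c * Bq q n ^ s * ((1 - q) * real m)" using c q Bq_ge1[OF q, of n] by simp
    have "W fs 0 m \<le> c * Bq q n ^ s * ((1 - q) * real m)"
    proof -
      have "c * Bq q m ^ s \<le> c * Bq q n ^ s"
        using Bq_pow_mono[OF q, of m n s] m c by (intro mult_left_mono) auto
      then have "c * Bq q m ^ s * ((1 - q) * real m) \<le> c * Bq q n ^ s * ((1 - q) * real m)"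
        using q by (intro mult_right_mono) auto
      then show ?thesis using h[of m] by linarith
    qed
    then have "W fs 0 m * Fq q m k \<le> (c * Bq q n ^ s * ((1 - q) * real m)) * (1 / real m ^ 2)"
      using Fq_le_sq[OF q _ k, of m] Fq_nonneg[OF q, of m k] m B0
      by (intro mult_mono) auto
    also have "\<dots> = (c * (1 - q) * Bq q n ^ s) * (1 / real m)"
      using m by (simp add: power2_eq_square)
    finally show "W fs 0 m * Fq q m k \<le> \<dots>" .
  qed
  also have "\<dots> = (c * (1 - q) * Bq q n ^ s) * (\<Sum>m\<in>{0<..<n}. 1 / real m)"
    by (simp add: sum_distrib_left)
  also have "\<dots> \<le> (c * (1 - q) * Bq q n ^ s) * Bq q n"
    using H_bound_B[OF q, of n] c q Bq_pow_nonneg[OF q, of n s]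
    by (intro mult_left_mono mult_nonneg_nonneg) auto
  also have "\<dots> = (c * (1 - q)) * Bq q n ^ (s + 1)" by (simp add: algebra_simps)
  finally show ?thesis .
qed



lemma prefix_bound:
  assumes q: "0 < q" "q < 1"
  shows "W (FL q p) 0 m \<le> 1 * Bq q m ^ length p"
proof -
  have "W ([] @ FL q p) 0 m \<le> 1 * Bq q m ^ (0 + length p) * 1"
    by (rule PBgen[OF q]) auto
  then show ?thesis by simp
qed

lemma bound_H0:
  assumes "w = [] \<or> 1 \<le> last w"
  shows "\<exists>C. \<forall>q. 0 < q \<and> q < 1 \<longrightarrow> (\<forall>M. ZqM_word q M w \<le> C * Lq q ^ length w)"
proof (cases "w = []")
  case True
  then show ?thesis by (intro exI[of _ 1]) (simp add: ZqM_word_W)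
next
  case False
  then obtain p k where w: "w = p @ [k]" by (metis rev_exhaust)
  have k: "1 \<le> k" using assms False w by simp
  show ?thesis
  proof (intro exI[of _ "KC (length p)"] allI impI)
    fix q :: real and M :: nat
    assume q: "0 < q \<and> q < 1"
    have "W (FL q p @ [\<lambda>m. Fq q m k]) 0 M \<le> 1 * KC (length p) * Lq q ^ (length p + 1)"
      by (rule FL_final) (use q k prefix_bound[of q p] in auto)
    then show "ZqM_word q M w \<le> KC (length p) * Lq q ^ length w"
      by (simp add: ZqM_word_W w)
  qed
qed

lemma bound_n0:
  assumes w: "w = p @ 0 # v @ k # x" and k: "2 \<le> k" and l: "1 \<le> last w"
  shows "\<exists>C e. \<forall>q. 0 < q \<and> q < 1 \<longrightarrow> (\<forall>M. ZqM_word q M w \<le> C * (1 - q) * Lq q ^ e)"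
proof (cases "x = []")
  case True
  let ?s = "length p + length v"
  show ?thesis
  proof (intro exI[of _ "KC ?s"] exI[of _ "?s + 1"] allI impI)
    fix q :: real and M :: nat
    assume q': "0 < q \<and> q < 1"
    then have q: "0 < q" "q < 1" by auto
    have h2: "W (FL q p @ [\<lambda>m. Fq q m 0]) 0 n \<le> 1 * Bq q n ^ length p * ((1 - q) * real n)" for n
      by (rule zero_step[OF q]) (use prefix_bound[OF q] in auto)
    have h3: "W ((FL q p @ [\<lambda>m. Fq q m 0]) @ FL q v) 0 n \<le> 1 * Bq q n ^ ?s * ((1 - q) * real n)" for n
      by (rule PBgen[OF q h2]) (use q in \<open>auto intro: mult_left_mono\<close>)
    have "W (((FL q p @ [\<lambda>m. Fq q m 0]) @ FL q v) @ [\<lambda>m. Fq q m k]) 0 M \<le> 1 * (1 - q) * KC ?s * Lq q ^ (?s + 1)"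
      by (rule FL_final2[OF q h3]) (use k in auto)
    then show "ZqM_word q M w \<le> KC ?s * (1 - q) * Lq q ^ (?s + 1)"
      by (simp add: ZqM_word_W w True algebra_simps)
  qed
next
  case False
  then obtain x' k' where x: "x = x' @ [k']" by (metis rev_exhaust)
  have k': "1 \<le> k'" using l w x by simp
  let ?s = "length p + length v"
  let ?t = "?s + 1 + length x'"
  show ?thesis
  proof (intro exI[of _ "KC ?t"] exI[of _ "?t + 1"] allI impI)
    fix q :: real and M :: nat
    assume q': "0 < q \<and> q < 1"
    then have q: "0 < q" "q < 1" by auto
    have h2: "W (FL q p @ [\<lambda>m. Fq q m 0]) 0 n \<le> 1 * Bq q n ^ length p * ((1 - q) * real n)" for n
      by (rule zero_step[OF q]) (use prefix_bound[OF q] in auto)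
    have h3: "W ((FL q p @ [\<lambda>m. Fq q m 0]) @ FL q v) 0 n \<le> 1 * Bq q n ^ ?s * ((1 - q) * real n)" for n
      by (rule PBgen[OF q h2]) (use q in \<open>auto intro: mult_left_mono\<close>)
    have h4: "W (((FL q p @ [\<lambda>m. Fq q m 0]) @ FL q v) @ [\<lambda>m. Fq q m k]) 0 n \<le> (1 * (1 - q)) * Bq q n ^ (?s + 1)" for n
      by (rule two_step[OF q h3]) (use k in auto)
    have h5: "W ((((FL q p @ [\<lambda>m. Fq q m 0]) @ FL q v) @ [\<lambda>m. Fq q m k]) @ FL q x') 0 n
        \<le> (1 - q) * Bq q n ^ (?s + 1 + length x') * 1" for n
      by (rule PBgen[OF q]) (use h4 q in auto)
    have "W (((((FL q p @ [\<lambda>m. Fq q m 0]) @ FL q v) @ [\<lambda>m. Fq q m k]) @ FL q x') @ [\<lambda>m. Fq q m k']) 0 M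
        \<le> (1 - q) * KC ?t * Lq q ^ (?t + 1)"
      by (rule FL_final[OF q]) (use h5 q k' in auto)
    then show "ZqM_word q M w \<le> KC ?t * (1 - q) * Lq q ^ (?t + 1)"
      by (simp add: ZqM_word_W w x algebra_simps)
  qed
qed

lemma ZqM_word_incseq:
  assumes q: "0 < q" "q < 1"
  shows "incseq (\<lambda>M. ZqM_word q M w)"
  unfolding incseq_def ZqM_word_W
  by (intro allI impI W_mono_b) (auto intro: Fq_nonneg[OF q])

lemma ZqM_word_nonneg:
  assumes q: "0 < q" "q < 1"
  shows "0 \<le> ZqM_word q M w"
  unfolding ZqM_word_W by (rule W_nonneg) (auto intro: Fq_nonneg[OF q])

lemma Zw_props:
  assumes q: "0 < q" "q < 1" and B: "\<And>M. ZqM_word q M w \<le> B"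
  shows "(\<lambda>M. ZqM_word q M w) \<longlonglongrightarrow> lim (\<lambda>M. ZqM_word q M w)"
    and "lim (\<lambda>M. ZqM_word q M w) \<le> B"
    and "ZqM_word q M w \<le> lim (\<lambda>M. ZqM_word q M w)"
    and "0 \<le> lim (\<lambda>M. ZqM_word q M w)"
proof -
  let ?X = "\<lambda>M. ZqM_word q M w"
  have bdd: "bdd_above (range ?X)" by (rule bdd_aboveI[where M=B]) (auto intro: B)
  have L: "?X \<longlonglongrightarrow> (SUP M. ?X M)"
    by (rule LIMSEQ_incseq_SUP[OF bdd ZqM_word_incseq[OF q]])
  then have l: "lim ?X = (SUP M. ?X M)" by (rule limI)
  show "?X \<longlonglongrightarrow> lim ?X" using L l by simp
  show "lim ?X \<le> B" unfolding l using B by (intro cSUP_least) auto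
  show u: "?X M \<le> lim ?X" for M unfolding l by (rule cSUP_upper[OF _ bdd]) simp
  show "0 \<le> lim ?X" using u[of 0] ZqM_word_nonneg[OF q, of 0 w] by linarith
qed

lemma sqrt_exp_half: "exp (t / 2) = sqrt (exp t)"
proof -
  have "exp t = exp (t / 2) ^ 2"
    by (simp add: power2_eq_square exp_add[symmetric])
  then show ?thesis by simp
qed

lemma lim0: "((\<lambda>q. C * (1 - q) * Lq q ^ e) \<longlongrightarrow> 0) (at_left (1::real))"
proof -
  have ev: "eventually (\<lambda>q. q \<in> {0<..<1}) (at_left (1::real))"
    by (rule eventually_at_left_real) simp
  have b: "\<bar>(1 - q) * Lq q ^ e\<bar> \<le> (2 * real e + 1) ^ e * sqrt (1 - q)" if q: "q \<in> {0<..<(1::real)}" for q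
  proof -
    let ?t = "ln (1 / (1 - q))"
    have t0: "0 \<le> ?t" using q by simp
    have "Lq q ^ e \<le> (2 * real e + 1) ^ e * exp (?t / 2)"
      unfolding Lq_def by (rule poly_exp[OF t0])
    also have "exp (?t / 2) = sqrt (1 / (1 - q))"
      using q by (simp add: sqrt_exp_half)
    finally have "(1 - q) * Lq q ^ e \<le> (1 - q) * ((2 * real e + 1) ^ e * sqrt (1 / (1 - q)))"
      using q by (intro mult_left_mono) auto
    also have "(1 - q) * sqrt (1 / (1 - q)) = sqrt (1 - q)"
    proof -
      have "(1 - q) = sqrt (1 - q) * sqrt (1 - q)" using q by simp
      then show ?thesis using q by (simp add: real_sqrt_divide field_simps)
    qed
    then have "(1 - q) * ((2 * real e + 1) ^ e * sqrt (1 / (1 - q))) = (2 * real e + 1) ^ e * sqrt (1 - q)"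
      by (metis mult.left_commute)
    finally show ?thesis using q Lq_ge1[of q] by simp
  qed
  have s: "((\<lambda>q. (2 * real e + 1) ^ e * sqrt (1 - q)) \<longlongrightarrow> (2 * real e + 1) ^ e * sqrt (1 - 1)) (at_left (1::real))"
    by (intro tendsto_intros)
  have "((\<lambda>q. (1 - q) * Lq q ^ e) \<longlongrightarrow> 0) (at_left (1::real))"
  proof (rule tendsto_sandwich[where f="\<lambda>_. 0" and h="\<lambda>q. (2 * real e + 1) ^ e * sqrt (1 - q)"])
    show "eventually (\<lambda>q. (1 - q) * Lq q ^ e \<le> (2 * real e + 1) ^ e * sqrt (1 - q)) (at_left (1::real))"
      using ev by eventually_elim (use b in \<open>fastforce intro: order_trans[OF abs_ge_self]\<close>)
    show "eventually (\<lambda>q. 0 \<le> (1 - q) * Lq q ^ e) (at_left (1::real))"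
    proof (rule eventually_mono[OF ev])
      fix q :: real assume "q \<in> {0<..<1}"
      then have "0 \<le> Lq q" "0 \<le> 1 - q" using Lq_ge1[of q] by auto
      then show "0 \<le> (1 - q) * Lq q ^ e" by simp
    qed
    show "((\<lambda>q. (2 * real e + 1) ^ e * sqrt (1 - q)) \<longlongrightarrow> 0) (at_left (1::real))"
      using s by simp
  qed simp
  then have "((\<lambda>q. C * ((1 - q) * Lq q ^ e)) \<longlongrightarrow> C * 0) (at_left (1::real))"
    by (intro tendsto_intros)
  then show ?thesis by (simp add: mult.assoc)
qed



lemma ab_word_Cons: "ab_word (a # \<alpha>) (b # \<beta>) = replicate a 0 @ (b + 1) # ab_word \<alpha> \<beta>"
  by (simp add: ab_word_def)

lemma ab_word_last:
  "length \<alpha> = length \<beta> \<Longrightarrow> \<alpha> \<noteq> [] \<Longrightarrow> ab_word \<alpha> \<beta> \<noteq> [] \<and> 1 \<le> last (ab_word \<alpha> \<beta>)"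
proof (induction \<alpha> \<beta> rule: list_induct2)
  case Nil
  then show ?case by simp
next
  case (Cons a \<alpha> b \<beta>)
  show ?case
  proof (cases "\<alpha> = []")
    case True
    then have "\<beta> = []" using Cons.hyps by simp
    then show ?thesis using True by (simp add: ab_word_Cons ab_word_def)
  next
    case False
    then show ?thesis using Cons.IH by (simp add: ab_word_Cons)
  qed
qed

definition has02 :: "nat list \<Rightarrow> bool" where
  "has02 w \<longleftrightarrow> (\<exists>p v k x. w = p @ 0 # v @ k # x \<and> 2 \<le> k)"

lemma has_big:
  "length \<alpha> = length \<beta> \<Longrightarrow> t < length \<beta> \<Longrightarrow> 1 \<le> \<beta> ! t \<Longrightarrow> \<exists>v k x. ab_word \<alpha> \<beta> = v @ k # x \<and> 2 \<le> k"
proof (induction \<alpha> \<beta> arbitrary: t rule: list_induct2)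
  case Nil
  then show ?case by simp
next
  case (Cons a \<alpha> b \<beta>)
  show ?case
  proof (cases t)
    case 0
    then show ?thesis using Cons.prems
      by (intro exI[of _ "replicate a 0"] exI[of _ "b + 1"] exI[of _ "ab_word \<alpha> \<beta>"]) (simp add: ab_word_Cons)
  next
    case (Suc t')
    have "\<exists>v k x. ab_word \<alpha> \<beta> = v @ k # x \<and> 2 \<le> k" using Cons.IH[of t'] Cons.prems Suc by simp
    then obtain v k x where "ab_word \<alpha> \<beta> = v @ k # x" "2 \<le> k" by blast
    then show ?thesis
      by (intro exI[of _ "replicate a 0 @ (b + 1) # v"] exI[of _ k] exI[of _ x]) (simp add: ab_word_Cons)
  qed
qed

lemma has02_ab:
  "length \<alpha> = length \<beta> \<Longrightarrow> s \<le> t \<Longrightarrow> t < length \<alpha> \<Longrightarrow> 1 \<le> \<alpha> ! s \<Longrightarrow> 1 \<le> \<beta> ! t \<Longrightarrow> has02 (ab_word \<alpha> \<beta>)"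
proof (induction \<alpha> \<beta> arbitrary: s t rule: list_induct2)
  case Nil
  then show ?case by simp
next
  case (Cons a \<alpha> b \<beta>)
  show ?case
  proof (cases s)
    case 0
    then have a: "1 \<le> a" using Cons.prems by simp
    have ra: "replicate a (0::nat) = 0 # replicate (a - 1) 0" using a
      by (metis One_nat_def Suc_pred less_eq_Suc_le replicate_Suc)
    show ?thesis
    proof (cases t)
      case 0
      then have "1 \<le> b" using Cons.prems by simp
      then show ?thesis unfolding has02_def ab_word_Cons ra
        by (intro exI[of _ "[]"] exI[of _ "replicate (a - 1) 0"] exI[of _ "b + 1"] exI[of _ "ab_word \<alpha> \<beta>"]) simp
    next
      case (Suc t')
      have "\<exists>v k x. ab_word \<alpha> \<beta> = v @ k # x \<and> 2 \<le> k"
        using has_big[OF Cons.hyps, of t'] Cons.prems Suc Cons.hyps by simp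
      then obtain v k x where vk: "ab_word \<alpha> \<beta> = v @ k # x" "2 \<le> k" by blast
      show ?thesis unfolding has02_def ab_word_Cons ra vk
        by (intro exI[of _ "[]"] exI[of _ "replicate (a - 1) 0 @ (b + 1) # v"] exI[of _ k] exI[of _ x])
          (use vk in simp)
    qed
  next
    case (Suc s')
    then obtain t' where t: "t = Suc t'" using Cons.prems by (cases t) auto
    have "has02 (ab_word \<alpha> \<beta>)" using Cons.IH[of s' t'] Cons.prems Suc t by simp
    then obtain p v k x where "ab_word \<alpha> \<beta> = p @ 0 # v @ k # x" "2 \<le> k" unfolding has02_def by blast
    then show ?thesis unfolding has02_def ab_word_Cons
      by (intro exI[of _ "replicate a 0 @ (b + 1) # p"] exI[of _ v] exI[of _ k] exI[of _ x]) simp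
  qed
qed

lemma n0_word_props: "n0_word w \<Longrightarrow> has02 w \<and> w \<noteq> [] \<and> 1 \<le> last w"
  unfolding n0_word_def using has02_ab ab_word_last by (metis length_0_conv not_one_le_zero)



abbreviation zl :: "nat list \<Rightarrow> (nat \<Rightarrow> real) list" where
  "zl ks \<equiv> map (\<lambda>k m. 1 / real m ^ k) ks"

lemma tele_aux:
  fixes x :: real assumes x: "0 < x"
  shows "1 / (x + 1) ^ 2 \<le> 1 / x - 1 / (x + 1)"
proof -
  have e: "1 / x - 1 / (x + 1) = 1 / (x * (x + 1))" using x by (simp add: field_simps)
  have "x * (x + 1) \<le> (x + 1) ^ 2" using x by (simp add: power2_eq_square)
  then have "1 / (x + 1) ^ 2 \<le> 1 / (x * (x + 1))" using x by (intro divide_left_mono) auto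
  then show ?thesis using e by simp
qed

lemma sq_tail_aux: "1 \<le> a \<Longrightarrow> (\<Sum>m\<in>{a<..<a + j + 1}. 1 / real m ^ 2) \<le> 1 / real a - 1 / real (a + j)"
proof (induction j)
  case 0
  have "{a<..<a + 0 + 1} = {}" by auto
  then show ?case by simp
next
  case (Suc j)
  have e: "{a<..<a + Suc j + 1} = insert (a + j + 1) {a<..<a + j + 1}" by auto
  have tele: "1 / real (a + j + 1) ^ 2 \<le> 1 / real (a + j) - 1 / real (a + Suc j)"
    using tele_aux[of "real (a + j)"] Suc.prems by (simp add: add_ac)
  have S: "(\<Sum>m\<in>{a<..<a + Suc j + 1}. 1 / real m ^ 2) = 1 / real (a + j + 1) ^ 2 + (\<Sum>m\<in>{a<..<a + j + 1}. 1 / real m ^ 2)"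
    unfolding e by (subst sum.insert) auto
  show ?case using S Suc.IH[OF Suc.prems] tele by linarith
qed

lemma sq_tail: "1 \<le> a \<Longrightarrow> (\<Sum>m\<in>{a<..<b}. 1 / real m ^ 2) \<le> 1 / real a"
proof -
  assume a: "1 \<le> a"
  show ?thesis
  proof (cases "b \<le> a + 1")
    case True
    then have "{a<..<b} = {}" by auto
    then show ?thesis by simp
  next
    case False
    define j where "j = b - a - 1"
    have b: "b = a + j + 1" using False by (simp add: j_def)
    have "0 \<le> 1 / real (a + j)" by simp
    then show ?thesis using sq_tail_aux[OF a, of j] unfolding b by linarith
  qed
qed

lemma sq_all: "(\<Sum>m\<in>{0<..<b}. 1 / real m ^ 2) \<le> 2"
proof -
  have "(\<Sum>m\<in>{0<..<b}. 1 / real m ^ 2) \<le> (\<Sum>m\<in>insert 1 {1<..<b}. 1 / real m ^ 2)"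
    by (intro sum_mono2) auto
  also have "\<dots> = 1 + (\<Sum>m\<in>{1<..<b}. 1 / real m ^ 2)" by simp
  also have "\<dots> \<le> 1 + 1" using sq_tail[of 1 b] by simp
  finally show ?thesis by simp
qed

lemma zl_nonneg: "0 \<le> W (zl ks) a b"
  by (rule W_nonneg) simp

lemma inv_pow_le: "0 < m \<Longrightarrow> j \<le> k \<Longrightarrow> 1 / real m ^ k \<le> 1 / real m ^ j"
  by (intro divide_left_mono power_increasing) auto

lemma admissible_Cons: "admissible (k # ks) \<Longrightarrow> ks \<noteq> [] \<Longrightarrow> admissible ks \<and> 1 \<le> k"
  by (simp add: admissible_def)

lemma zeta_term:
  assumes "admissible (k # ks)" "0 < m"
    and IH: "ks \<noteq> [] \<Longrightarrow> W (zl ks) m b \<le> 1 / real m"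
  shows "1 / real m ^ k * W (zl ks) m b \<le> 1 / real m ^ 2"
proof (cases "ks = []")
  case True
  then have "2 \<le> k" using assms(1) by (simp add: admissible_def)
  then show ?thesis using True inv_pow_le[OF assms(2)] by simp
next
  case False
  then have k: "1 \<le> k" using admissible_Cons[OF assms(1)] by simp
  have "1 / real m ^ k * W (zl ks) m b \<le> (1 / real m) * (1 / real m)"
    using inv_pow_le[OF assms(2) k] IH[OF False] zl_nonneg[of ks m b]
    by (intro mult_mono) auto
  then show ?thesis by (simp add: power2_eq_square)
qed

lemma zeta_tail: "ks \<noteq> [] \<Longrightarrow> admissible ks \<Longrightarrow> 1 \<le> a \<Longrightarrow> W (zl ks) a b \<le> 1 / real a"
proof (induction ks arbitrary: a)
  case Nil
  then show ?case by simp
next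
  case (Cons k ks)
  have "W (zl (k # ks)) a b = (\<Sum>m\<in>{a<..<b}. 1 / real m ^ k * W (zl ks) m b)"
    by (simp add: W_Cons)
  also have "\<dots> \<le> (\<Sum>m\<in>{a<..<b}. 1 / real m ^ 2)"
  proof (rule sum_mono)
    fix m assume m: "m \<in> {a<..<b}"
    show "1 / real m ^ k * W (zl ks) m b \<le> 1 / real m ^ 2"
      by (rule zeta_term[OF Cons.prems(2)]) (use m Cons admissible_Cons[OF Cons.prems(2)] in auto)
  qed
  also have "\<dots> \<le> 1 / real a" by (rule sq_tail[OF Cons.prems(3)])
  finally show ?case .
qed

lemma zeta_bound: "admissible ks \<Longrightarrow> W (zl ks) 0 b \<le> 2"
proof (cases ks)
  case Nil
  then show ?thesis by simp
next
  case (Cons k ks')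
  assume adm: "admissible ks"
  have "W (zl ks) 0 b = (\<Sum>m\<in>{0<..<b}. 1 / real m ^ k * W (zl ks') m b)"
    by (simp add: W_Cons Cons)
  also have "\<dots> \<le> (\<Sum>m\<in>{0<..<b}. 1 / real m ^ 2)"
  proof (rule sum_mono)
    fix m assume m: "m \<in> {0<..<b}"
    show "1 / real m ^ k * W (zl ks') m b \<le> 1 / real m ^ 2"
      by (rule zeta_term) (use m adm Cons zeta_tail admissible_Cons in auto)
  qed
  also have "\<dots> \<le> 2" by (rule sq_all)
  finally show ?thesis .
qed

lemma Fq_tendsto:
  assumes m: "0 < m" and k: "1 \<le> k"
  shows "((\<lambda>q. Fq q m k) \<longlongrightarrow> 1 / real m ^ k) (at_left (1::real))"
proof -
  have "((\<lambda>q. q ^ (k * m) / (\<Sum>i<m. q ^ i) ^ k) \<longlongrightarrow> 1 ^ (k * m) / (\<Sum>i<m. (1::real) ^ i) ^ k) (at_left (1::real))"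
    using m by (intro tendsto_intros) auto
  then have L: "((\<lambda>q. q ^ (k * m) / (\<Sum>i<m. q ^ i) ^ k) \<longlongrightarrow> 1 / real m ^ k) (at_left (1::real))" by simp
  have ev: "eventually (\<lambda>q. q \<in> {0<..<1}) (at_left (1::real))"
    by (rule eventually_at_left_real) simp
  have "eventually (\<lambda>q. q ^ (k * m) / (\<Sum>i<m. q ^ i) ^ k = Fq q m k) (at_left (1::real))"
    using ev by eventually_elim (use k in \<open>auto simp: Fq_def qint_sum\<close>)
  then show ?thesis by (rule Lim_transform_eventually[OF L])
qed

lemma ZqM_word_tendsto:
  assumes ks: "\<forall>k\<in>set ks. 1 \<le> k"
  shows "((\<lambda>q. ZqM_word q M ks) \<longlongrightarrow> W (zl ks) 0 M) (at_left (1::real))"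
  unfolding ZqM_word_def W_def incseqs_def incs_def length_map
proof (rule tendsto_sum, rule tendsto_prod)
  fix ms i assume ms: "ms \<in> {ms. length ms = length ks \<and> sorted_wrt (<) ms \<and> (\<forall>m\<in>set ms. 0 < m \<and> m < M)}"
    and i: "i \<in> {..<length ks}"
  have "0 < ms ! i" using ms i by auto
  moreover have "1 \<le> ks ! i" using ks i by auto
  ultimately show "((\<lambda>q. Fq q (ms ! i) (ks ! i)) \<longlongrightarrow> (zl ks ! i) (ms ! i)) (at_left 1)"
    using i Fq_tendsto by auto
qed



lemma Zq_gidx: "Zq q (gidx ks) = lim (\<lambda>M. ZqM_word q M ks)"
proof -
  have s: "{w. gidx ks w \<noteq> 0} = {ks}" by (auto simp: gidx_def)
  have "ZqM q M (gidx ks) = ZqM_word q M ks" for M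
    unfolding ZqM_def s by (simp add: gidx_def)
  then show ?thesis by (simp add: Zq_def)
qed

lemma part1:
  assumes adm: "admissible ks"
  shows "((\<lambda>q. Zq q (gidx ks)) \<longlongrightarrow> mzv ks) (at_left (1::real))"
proof -
  let ?S = "\<lambda>M. W (zl ks) 0 M"
  have inc: "incseq ?S" unfolding incseq_def by (intro allI impI W_mono_b) auto
  have bdd: "bdd_above (range ?S)" by (rule bdd_aboveI[where M=2]) (auto intro: zeta_bound[OF adm])
  have LS: "?S \<longlonglongrightarrow> (SUP M. ?S M)" by (rule LIMSEQ_incseq_SUP[OF bdd inc])
  have mz: "mzv ks = (SUP M. ?S M)" unfolding mzv_W by (rule limI[OF LS])
  have LS': "?S \<longlonglongrightarrow> mzv ks" using LS mz by simp
  have Sle: "?S M \<le> mzv ks" for M by (rule incseq_le[OF inc LS'])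
  have ks1: "\<forall>k\<in>set ks. 1 \<le> k" using adm by (simp add: admissible_def)
  have Zle: "ZqM_word q M ks \<le> ?S M" if q: "0 < q" "q < 1" for q M
    unfolding ZqM_word_W
  proof (rule W_le)
    show "length (FL q ks) = length (zl ks)" by simp
    fix i and m :: nat assume i: "i < length (FL q ks)" and m: "0 < m"
    have k: "1 \<le> ks ! i" using ks1 i by simp
    show "0 \<le> (FL q ks ! i) m \<and> (FL q ks ! i) m \<le> (zl ks ! i) m"
      using i Fq_nonneg[OF q m] Fq_le_zeta[OF q m k] by simp
  qed
  have ZP: "lim (\<lambda>M. ZqM_word q M ks) \<le> mzv ks \<and> ZqM_word q M ks \<le> lim (\<lambda>M. ZqM_word q M ks)"
    if q: "0 < q" "q < 1" for q M
  proof -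
    have B: "ZqM_word q M ks \<le> mzv ks" for M using Zle[OF q, of M] Sle[of M] by linarith
    show ?thesis using Zw_props(2,3)[OF q B] by blast
  qed
  show ?thesis
  proof (rule tendstoI)
    fix e :: real assume e: "0 < e"
    obtain M where M: "\<forall>n\<ge>M. norm (?S n - mzv ks) < e / 2"
      using LIMSEQ_D[OF LS', of "e / 2"] e by auto
    then have "\<bar>?S M - mzv ks\<bar> < e / 2" by (metis order_refl real_norm_def)
    then have SM: "mzv ks - e / 2 < ?S M" unfolding abs_less_iff by linarith
    have ev1: "eventually (\<lambda>q. dist (ZqM_word q M ks) (?S M) < e / 2) (at_left (1::real))"
      using tendstoD[OF ZqM_word_tendsto[OF ks1, of M], of "e / 2"] e by simp
    have ev2: "eventually (\<lambda>q. q \<in> {0<..<1}) (at_left (1::real))"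
      by (rule eventually_at_left_real) simp
    show "eventually (\<lambda>q. dist (Zq q (gidx ks)) (mzv ks) < e) (at_left (1::real))"
      using ev1 ev2
    proof eventually_elim
      case (elim q)
      then have q: "0 < q" "q < 1" by auto
      have a: "lim (\<lambda>M. ZqM_word q M ks) \<le> mzv ks" "ZqM_word q M ks \<le> lim (\<lambda>M. ZqM_word q M ks)"
        using ZP[OF q, of M] by auto
      have "\<bar>ZqM_word q M ks - ?S M\<bar> < e / 2" using elim(1) by (simp only: dist_real_def)
      then have "?S M - e / 2 < ZqM_word q M ks" unfolding abs_less_iff by linarith
      then show ?case using a SM by (simp add: Zq_gidx dist_real_def abs_less_iff)
    qed
  qed
qed

lemma map_poly_of_rat_add:
  "map_poly (of_rat :: rat \<Rightarrow> real) (a + b) = map_poly of_rat a + map_poly of_rat b"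
  by (rule poly_eqI) (simp add: coeff_map_poly of_rat_add)

lemma poly_mp_X:
  "poly (map_poly (of_rat :: rat \<Rightarrow> real) ([:0, 1:] * b)) x = x * poly (map_poly of_rat b) x"
proof -
  have A: "[:0, 1:] * b = pCons 0 b" by simp
  have B: "map_poly (of_rat :: rat \<Rightarrow> real) (pCons 0 b) = pCons 0 (map_poly of_rat b)"
    by (simp add: map_poly_pCons)
  show ?thesis by (simp only: A B poly_pCons)
qed

lemma mp_eval:
  "poly (map_poly (of_rat :: rat \<Rightarrow> real) (a + [:0, 1:] * b)) x
    = poly (map_poly of_rat a) x + x * poly (map_poly of_rat b) x"
  by (simp only: map_poly_of_rat_add poly_add poly_mp_X)

lemma ZqM_sum:
  assumes "finite S" "{w. c w \<noteq> 0} \<subseteq> S"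
  shows "ZqM q M c = (\<Sum>w\<in>S. poly (map_poly of_rat (c w)) (1 - q) * ZqM_word q M w)"
  unfolding ZqM_def by (rule sum.mono_neutral_left) (use assms in auto)



lemma word_H0_tendsto:
  assumes "w = [] \<or> 1 \<le> last w"
  shows "((\<lambda>q. (1 - q) * lim (\<lambda>M. ZqM_word q M w)) \<longlongrightarrow> 0) (at_left (1::real))"
proof -
  obtain C where C: "\<And>q M. 0 < q \<Longrightarrow> q < 1 \<Longrightarrow> ZqM_word q M w \<le> C * Lq q ^ length w"
    using bound_H0[OF assms] by blast
  have ev: "eventually (\<lambda>q. q \<in> {0<..<1}) (at_left (1::real))"
    by (rule eventually_at_left_real) simp
  show ?thesis
  proof (rule tendsto_sandwich[where f="\<lambda>_. 0" and h="\<lambda>q. C * (1 - q) * Lq q ^ length w"])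
    show "eventually (\<lambda>q. 0 \<le> (1 - q) * lim (\<lambda>M. ZqM_word q M w)) (at_left (1::real))"
      using ev
    proof eventually_elim
      case (elim q)
      then have q: "0 < q" "q < 1" by auto
      show ?case using Zw_props(4)[OF q C[OF q]] q by simp
    qed
    show "eventually (\<lambda>q. (1 - q) * lim (\<lambda>M. ZqM_word q M w) \<le> C * (1 - q) * Lq q ^ length w) (at_left (1::real))"
      using ev
    proof eventually_elim
      case (elim q)
      then have q: "0 < q" "q < 1" by auto
      have "(1 - q) * lim (\<lambda>M. ZqM_word q M w) \<le> (1 - q) * (C * Lq q ^ length w)"
        using Zw_props(2)[OF q C[OF q]] q by (intro mult_left_mono) auto
      then show ?case by (simp add: algebra_simps)
    qed
  qed (auto intro: lim0)
qed

lemma word_n0_tendsto: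
  assumes "n0_word w"
  shows "((\<lambda>q. lim (\<lambda>M. ZqM_word q M w)) \<longlongrightarrow> 0) (at_left (1::real))"
proof -
  have w: "has02 w" "w \<noteq> []" "1 \<le> last w" using n0_word_props[OF assms] by auto
  obtain C0 where C0: "\<And>q M. 0 < q \<Longrightarrow> q < 1 \<Longrightarrow> ZqM_word q M w \<le> C0 * Lq q ^ length w"
    using bound_H0[of w] w by blast
  obtain p v k x where pvkx: "w = p @ 0 # v @ k # x" "2 \<le> k" using w(1) unfolding has02_def by blast
  obtain C e where C: "\<And>q M. 0 < q \<Longrightarrow> q < 1 \<Longrightarrow> ZqM_word q M w \<le> C * (1 - q) * Lq q ^ e"
    using bound_n0[OF pvkx w(3)] by blast
  have ev: "eventually (\<lambda>q. q \<in> {0<..<1}) (at_left (1::real))"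
    by (rule eventually_at_left_real) simp
  show ?thesis
  proof (rule tendsto_sandwich[where f="\<lambda>_. 0" and h="\<lambda>q. C * (1 - q) * Lq q ^ e"])
    show "eventually (\<lambda>q. 0 \<le> lim (\<lambda>M. ZqM_word q M w)) (at_left (1::real))"
      using ev
    proof eventually_elim
      case (elim q)
      then have q: "0 < q" "q < 1" by auto
      show ?case using Zw_props(4)[OF q C0[OF q]] by simp
    qed
    show "eventually (\<lambda>q. lim (\<lambda>M. ZqM_word q M w) \<le> C * (1 - q) * Lq q ^ e) (at_left (1::real))"
      using ev
    proof eventually_elim
      case (elim q)
      then have q: "0 < q" "q < 1" by auto
      show ?case using Zw_props(2)[OF q C[OF q]] by simp
    qed
  qed (auto intro: lim0)
qed

lemma part2:
  assumes w0: "w0 \<in> nset"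
  shows "((\<lambda>q. Zq q w0) \<longlongrightarrow> 0) (at_left (1::real))"
proof -
  obtain x y where w0d: "w0 = (\<lambda>w. x w + [:0, 1:] * y w)" and x: "x \<in> n0" and y: "y \<in> H0hat"
    using w0 unfolding nset_def by blast
  define S where "S = {w. x w \<noteq> 0} \<union> {w. y w \<noteq> 0}"
  have fin: "finite S" using x y unfolding S_def n0_def H0hat_def CA_def fsupp_def by auto
  have sub: "{w. w0 w \<noteq> 0} \<subseteq> S" unfolding S_def w0d by auto
  have hS: "w = [] \<or> 1 \<le> last w" if "w \<in> S" for w
  proof (cases "x w \<noteq> 0")
    case True
    then have "n0_word w" using x unfolding n0_def by auto
    then show ?thesis using n0_word_props by auto
  next
    case False
    then have "y w \<noteq> 0" using that unfolding S_def by auto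
    then show ?thesis using y unfolding H0hat_def by auto
  qed
  define P where "P w q = poly (map_poly (of_rat :: rat \<Rightarrow> real) (x w)) (1 - q)" for w q
  define Q where "Q w q = poly (map_poly (of_rat :: rat \<Rightarrow> real) (y w)) (1 - q)" for w q
  define Zw where "Zw q w = lim (\<lambda>M. ZqM_word q M w)" for q w
  have ev: "eventually (\<lambda>q. q \<in> {0<..<1}) (at_left (1::real))"
    by (rule eventually_at_left_real) simp
  have EQ: "eventually (\<lambda>q. (\<Sum>w\<in>S. P w q * Zw q w + Q w q * ((1 - q) * Zw q w)) = Zq q w0) (at_left (1::real))"
    using ev
  proof eventually_elim
    case (elim q)
    then have q: "0 < q" "q < 1" by auto
    have Z: "ZqM q M w0 = (\<Sum>w\<in>S. (P w q + (1 - q) * Q w q) * ZqM_word q M w)" for M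
      unfolding ZqM_sum[OF fin sub] by (simp only: w0d mp_eval P_def Q_def)
    have "(\<lambda>M. ZqM q M w0) \<longlonglongrightarrow> (\<Sum>w\<in>S. (P w q + (1 - q) * Q w q) * Zw q w)"
      unfolding Z
    proof (rule tendsto_sum)
      fix w assume "w \<in> S"
      then obtain C where C: "\<And>q M. 0 < q \<Longrightarrow> q < 1 \<Longrightarrow> ZqM_word q M w \<le> C * Lq q ^ length w"
        using bound_H0[OF hS] by blast
      show "(\<lambda>M. (P w q + (1 - q) * Q w q) * ZqM_word q M w) \<longlonglongrightarrow> (P w q + (1 - q) * Q w q) * Zw q w"
        unfolding Zw_def by (intro tendsto_mult_left Zw_props(1)[OF q C[OF q]])
    qed
    then have "Zq q w0 = (\<Sum>w\<in>S. (P w q + (1 - q) * Q w q) * Zw q w)"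
      unfolding Zq_def by (rule limI)
    then show ?case by (simp add: algebra_simps)
  qed
  have "((\<lambda>q. \<Sum>w\<in>S. P w q * Zw q w + Q w q * ((1 - q) * Zw q w)) \<longlongrightarrow> (\<Sum>w\<in>S. 0 + 0)) (at_left (1::real))"
  proof (intro tendsto_sum tendsto_add)
    fix w assume wS: "w \<in> S"
    have Qt: "((\<lambda>q. Q w q) \<longlongrightarrow> poly (map_poly of_rat (y w)) (1 - 1)) (at_left (1::real))"
      unfolding Q_def by (intro tendsto_intros)
    have "((\<lambda>q. Q w q * ((1 - q) * Zw q w)) \<longlongrightarrow> poly (map_poly of_rat (y w)) (1 - 1) * 0) (at_left (1::real))"
      unfolding Zw_def by (intro tendsto_mult Qt word_H0_tendsto hS wS)
    then show "((\<lambda>q. Q w q * ((1 - q) * Zw q w)) \<longlongrightarrow> 0) (at_left (1::real))" by simp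
    show "((\<lambda>q. P w q * Zw q w) \<longlongrightarrow> 0) (at_left (1::real))"
    proof (cases "x w = 0")
      case True
      then show ?thesis by (simp add: P_def)
    next
      case False
      then have n0w: "n0_word w" using x unfolding n0_def by auto
      have Pt: "((\<lambda>q. P w q) \<longlongrightarrow> poly (map_poly of_rat (x w)) (1 - 1)) (at_left (1::real))"
        unfolding P_def by (intro tendsto_intros)
      have "((\<lambda>q. P w q * Zw q w) \<longlongrightarrow> poly (map_poly of_rat (x w)) (1 - 1) * 0) (at_left (1::real))"
        unfolding Zw_def by (intro tendsto_mult Pt word_n0_tendsto n0w)
      then show ?thesis by simp
    qed
  qed
  then have "((\<lambda>q. \<Sum>w\<in>S. P w q * Zw q w + Q w q * ((1 - q) * Zw q w)) \<longlongrightarrow> 0) (at_left (1::real))"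
    by simp
  then show ?thesis by (rule Lim_transform_eventually[OF _ EQ])
qed

theorem proposition3p4:
  shows "(\<forall>ks. admissible ks \<longrightarrow> ((\<lambda>q. Zq q (gidx ks)) \<longlongrightarrow> mzv ks) (at_left 1))
       \<and> (\<forall>w\<in>nset. ((\<lambda>q. Zq q w) \<longlongrightarrow> 0) (at_left 1))"
  using part1 part2 by blast

end
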